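(* Let $\Gamma$ be a regular bipartite simple graph. Then $E(\Gamma)=E(\bar\Gamma)$ if and only if $\Gamma\cong C_4$ or $\Gamma\cong Cr(t)$ for some $t\ge 2$. Moreover, in these cases $\Gamma$ and $\bar\Gamma$ are both integral and are not isospectral to each other.
   Context: The energy $E(\Gamma)$ is the sum of the absolute values of the adjacency eigenvalues (with multiplicity); $\bar\Gamma$ is the complement of $\Gamma$. $C_4$ is the 4-cycle. The crown graph $Cr(t)$ is obtained from the complete bipartite graph $K_{t,t}$ by deleting a perfect matching (equivalently $Cr(t)=K_2\otimes K_t$, Kronecker product). A graph is integral if all its adjacency eigenvalues are integers; two graphs are isospectral if their adjacency spectra (with multiplicities) coincide. *)

theory Defs
  imports "Jordan_Normal_Form.Char_Poly" "HOL-Computational_Algebra.Polynomial"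
begin

definition simple_graph :: "nat \<Rightarrow> (nat \<Rightarrow> nat \<Rightarrow> bool) \<Rightarrow> bool" where
  "simple_graph n E \<longleftrightarrow> (\<forall>i<n. \<forall>j<n. E i j \<longrightarrow> E j i) \<and> (\<forall>i<n. \<not> E i i)"

definition regular_graph :: "nat \<Rightarrow> (nat \<Rightarrow> nat \<Rightarrow> bool) \<Rightarrow> bool" where
  "regular_graph n E \<longleftrightarrow> (\<exists>k. \<forall>v<n. card {u. u < n \<and> E v u} = k)"

definition bipartite_graph :: "nat \<Rightarrow> (nat \<Rightarrow> nat \<Rightarrow> bool) \<Rightarrow> bool" where
  "bipartite_graph n E \<longleftrightarrow> (\<exists>S. \<forall>i<n. \<forall>j<n. E i j \<longrightarrow> (i \<in> S \<longleftrightarrow> j \<notin> S))"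

definition complement_graph :: "nat \<Rightarrow> (nat \<Rightarrow> nat \<Rightarrow> bool) \<Rightarrow> nat \<Rightarrow> nat \<Rightarrow> bool" where
  "complement_graph n E i j \<longleftrightarrow> i < n \<and> j < n \<and> i \<noteq> j \<and> \<not> E i j"

definition adj_matrix :: "nat \<Rightarrow> (nat \<Rightarrow> nat \<Rightarrow> bool) \<Rightarrow> complex mat" where
  "adj_matrix n E = mat n n (\<lambda>(i, j). if E i j then 1 else 0)"

definition adj_spectrum :: "nat \<Rightarrow> (nat \<Rightarrow> nat \<Rightarrow> bool) \<Rightarrow> complex multiset" where
  "adj_spectrum n E = proots (char_poly (adj_matrix n E))"

definition graph_energy :: "nat \<Rightarrow> (nat \<Rightarrow> nat \<Rightarrow> bool) \<Rightarrow> real" where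
  "graph_energy n E = (\<Sum>x\<in>#adj_spectrum n E. cmod x)"

definition integral_graph :: "nat \<Rightarrow> (nat \<Rightarrow> nat \<Rightarrow> bool) \<Rightarrow> bool" where
  "integral_graph n E \<longleftrightarrow> (\<forall>x\<in>#adj_spectrum n E. x \<in> \<int>)"

definition isospectral :: "nat \<Rightarrow> (nat \<Rightarrow> nat \<Rightarrow> bool) \<Rightarrow> nat \<Rightarrow> (nat \<Rightarrow> nat \<Rightarrow> bool) \<Rightarrow> bool" where
  "isospectral n E m F \<longleftrightarrow> adj_spectrum n E = adj_spectrum m F"

definition graph_iso :: "nat \<Rightarrow> (nat \<Rightarrow> nat \<Rightarrow> bool) \<Rightarrow> nat \<Rightarrow> (nat \<Rightarrow> nat \<Rightarrow> bool) \<Rightarrow> bool" where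
  "graph_iso n E m F \<longleftrightarrow> (\<exists>f. bij_betw f {0..<n} {0..<m} \<and>
     (\<forall>i<n. \<forall>j<n. E i j \<longleftrightarrow> F (f i) (f j)))"

definition C4 :: "nat \<Rightarrow> nat \<Rightarrow> bool" where
  "C4 i j \<longleftrightarrow> i < 4 \<and> j < 4 \<and> ((i + 1) mod 4 = j \<or> (j + 1) mod 4 = i)"

text \<open>Crown graph Cr(t) on {0..<2t}: parts {0..<t} and {t..<2t}, vertex i adjacent
  to t+j iff i \<noteq> j (K_{t,t} minus the perfect matching i -- t+i).\<close>
definition crown :: "nat \<Rightarrow> nat \<Rightarrow> nat \<Rightarrow> bool" where
  "crown t i j \<longleftrightarrow> (i < t \<and> t \<le> j \<and> j < 2 * t \<and> j \<noteq> i + t) \<or>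
                    (j < t \<and> t \<le> i \<and> i < 2 * t \<and> i \<noteq> j + t)"

end

theory Submission
  imports Defs "Jordan_Normal_Form.Schur_Decomposition"
begin



lemma triangularize:
  fixes A :: "complex mat" assumes A: "A \<in> carrier_mat n n"
  shows "\<exists>B P Q. similar_mat_wit A B P Q \<and> upper_triangular B"
proof -
  obtain as where c: "char_poly A = (\<Prod>a\<leftarrow>as. [:- a, 1:])" using char_poly_factorized[OF A] by blast
  obtain B P Q where s: "schur_decomposition A as = (B,P,Q)" by (cases "schur_decomposition A as", auto)
  from schur_decomposition[OF A c s] show ?thesis by blast
qed

lemma proots_linear_list: "proots (\<Prod>a\<leftarrow>xs. [:- a, 1:]) = mset (xs :: 'a::idom list)"
proof (induction xs)
  case Nil then show ?case by simp
next
  case (Cons a xs)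
  have "(\<Prod>a\<leftarrow>xs. [:- a, 1:]) \<noteq> 0" by (auto simp: prod_list_zero_iff)
  then have "proots ([:- a, 1:] * (\<Prod>a\<leftarrow>xs. [:- a, 1:])) = proots [:- a, 1:] + proots (\<Prod>a\<leftarrow>xs. [:- a, 1:])"
    by (intro proots_mult) auto
  then show ?case using Cons by simp
qed

lemma spec_tri:
  fixes A :: "'a::field mat"
  assumes "similar_mat_wit A B P Q" "upper_triangular B" "A \<in> carrier_mat n n"
  shows "proots (char_poly A) = mset (diag_mat B)"
proof -
  have "similar_mat A B" using assms unfolding similar_mat_def by blast
  hence "char_poly A = char_poly B" by (rule char_poly_similar)
  moreover have "B \<in> carrier_mat n n" using similar_mat_witD2(5)[OF assms(3,1)] .
  ultimately show ?thesis using char_poly_upper_triangular[OF _ assms(2)] proots_linear_list by metis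
qed

definition tr :: "'a::comm_ring_1 mat \<Rightarrow> 'a" where "tr M = (\<Sum>i<dim_row M. M $$ (i,i))"

lemma tr_comm:
  fixes A B :: "'a::comm_ring_1 mat"
  assumes "A \<in> carrier_mat n m" "B \<in> carrier_mat m n"
  shows "tr (A * B) = tr (B * A)"
proof -
  have "tr (A * B) = (\<Sum>i<n. \<Sum>j<m. A $$ (i,j) * B $$ (j,i))"
    using assms by (auto simp: tr_def scalar_prod_def intro!: sum.cong atLeast0LessThan)
  also have "\<dots> = (\<Sum>j<m. \<Sum>i<n. B $$ (j,i) * A $$ (i,j))"
    by (subst sum.swap) (simp add: mult.commute)
  also have "\<dots> = tr (B * A)"
    using assms by (auto simp: tr_def scalar_prod_def intro!: sum.cong atLeast0LessThan)
  finally show ?thesis .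
qed

lemma tr_similar:
  fixes A :: "'a::comm_ring_1 mat"
  assumes "similar_mat_wit A B P Q" "A \<in> carrier_mat n n"
  shows "tr A = tr B"
proof -
  note s = similar_mat_witD2[OF assms(2,1)]
  have "tr A = tr (P * (B * Q))" using s by (simp add: assoc_mult_mat[of _ n n _ n _ n])
  also have "\<dots> = tr ((B * Q) * P)" using s by (intro tr_comm) auto
  also have "\<dots> = tr (B * (Q * P))" using s by (simp add: assoc_mult_mat[of _ n n _ n _ n])
  also have "\<dots> = tr B" using s by simp
  finally show ?thesis .
qed

lemma tr_upper: "tr B = sum_list (diag_mat B)"
  by (simp add: tr_def diag_mat_def sum_list_sum_nth atLeast0LessThan)

lemma tr_upper_sq:
  fixes B :: "'a::comm_ring_1 mat"
  assumes "upper_triangular B" "B \<in> carrier_mat n n"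
  shows "tr (B * B) = (\<Sum>x\<leftarrow>diag_mat B. x^2)"
proof -
  have "tr (B * B) = (\<Sum>i<n. \<Sum>j<n. B $$ (i,j) * B $$ (j,i))"
    using assms by (auto simp: tr_def scalar_prod_def intro!: sum.cong atLeast0LessThan)
  also have "\<dots> = (\<Sum>i<n. B $$ (i,i)^2)"
  proof (rule sum.cong[OF refl])
    fix i assume i: "i \<in> {..<n}"
    have "(\<Sum>j<n. B $$ (i,j) * B $$ (j,i)) = (\<Sum>j\<in>{i}. B $$ (i,j) * B $$ (j,i))"
    proof (rule sum.mono_neutral_right)
      show "\<forall>j\<in>{..<n} - {i}. B $$ (i,j) * B $$ (j,i) = 0"
      proof
        fix j assume j: "j \<in> {..<n} - {i}"
        have d: "dim_row B = n" using assms(2) by auto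
        show "B $$ (i,j) * B $$ (j,i) = 0"
        proof (cases "j < i")
          case True then show ?thesis using assms(1) i d unfolding upper_triangular_def by auto
        next
          case False then have "i < j" using j by auto
          then show ?thesis using assms(1) j d unfolding upper_triangular_def by auto
        qed
      qed
    qed (use i in auto)
    then show "(\<Sum>j<n. B $$ (i,j) * B $$ (j,i)) = B $$ (i,i)^2" by (simp add: power2_eq_square)
  qed
  also have "\<dots> = (\<Sum>x\<leftarrow>diag_mat B. x^2)"
    using assms by (simp add: diag_mat_def sum_list_sum_nth atLeast0LessThan)
  finally show ?thesis .
qed

lemma tr_sq_similar:
  fixes A :: "'a::comm_ring_1 mat"
  assumes "similar_mat_wit A B P Q" "A \<in> carrier_mat n n" "upper_triangular B"
  shows "tr (A * A) = (\<Sum>x\<leftarrow>diag_mat B. x^2)"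
proof -
  have "similar_mat_wit (A ^\<^sub>m 2) (B ^\<^sub>m 2) P Q" by (rule similar_mat_wit_pow[OF assms(1)])
  moreover have "A ^\<^sub>m 2 = A * A" "B ^\<^sub>m 2 = B * B"
    using assms similar_mat_witD2[OF assms(2,1)] by (simp_all add: numeral_2_eq_2)
  ultimately have "tr (A * A) = tr (B * B)" using assms by (metis mult_carrier_mat tr_similar)
  also have "\<dots> = (\<Sum>x\<leftarrow>diag_mat B. x^2)"
    using tr_upper_sq assms similar_mat_witD2[OF assms(2,1)] by blast
  finally show ?thesis .
qed

lemma prod_list_neg: "(\<Prod>a\<leftarrow>xs. (-1) * (f a :: 'a::comm_ring_1)) = (-1)^length xs * (\<Prod>a\<leftarrow>xs. f a)"
  by (induction xs) auto

lemma det_shift: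
  fixes A :: "'a::field mat"
  assumes "similar_mat_wit A B P Q" "upper_triangular B" "A \<in> carrier_mat n n"
  shows "det (A + c \<cdot>\<^sub>m 1\<^sub>m n) = (\<Prod>a\<leftarrow>diag_mat B. a + c)"
proof -
  have B: "B \<in> carrier_mat n n" using similar_mat_witD2(5)[OF assms(3,1)] .
  have "char_poly A = char_poly B" using assms unfolding similar_mat_def
    by (intro char_poly_similar) (auto simp: similar_mat_def)
  also have "\<dots> = (\<Prod>a\<leftarrow>diag_mat B. [:- a, 1:])" using char_poly_upper_triangular[OF B assms(2)] .
  finally have cp: "char_poly A = (\<Prod>a\<leftarrow>diag_mat B. [:- a, 1:])" .
  have "poly (char_poly A) (-c) = det (- (char_matrix A (-c)))" by (rule char_poly_matrix[OF assms(3)])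
  also have "- (char_matrix A (-c)) = (-1) \<cdot>\<^sub>m (A + c \<cdot>\<^sub>m 1\<^sub>m n)"
    using assms(3) by (auto simp: char_matrix_def)
  also have "det \<dots> = (-1)^n * det (A + c \<cdot>\<^sub>m 1\<^sub>m n)" using assms(3) by simp
  finally have 1: "poly (char_poly A) (-c) = (-1)^n * det (A + c \<cdot>\<^sub>m 1\<^sub>m n)" .
  have "poly (char_poly A) (-c) = (\<Prod>a\<leftarrow>diag_mat B. (-1) * (a + c))"
    unfolding cp by (simp add: poly_prod_list o_def)
  also have "\<dots> = (-1)^n * (\<Prod>a\<leftarrow>diag_mat B. a + c)"
    using B prod_list_neg[where xs="diag_mat B" and f="\<lambda>a. a + c"] by (simp add: diag_mat_def)
  finally show ?thesis using 1 by simp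
qed




definition nbr :: "nat \<Rightarrow> (nat \<Rightarrow> nat \<Rightarrow> bool) \<Rightarrow> nat \<Rightarrow> nat set" where
  "nbr n E i = {u. u < n \<and> E i u}"

locale bgraph =
  fixes n :: nat and E :: "nat \<Rightarrow> nat \<Rightarrow> bool" and k :: nat and S :: "nat set"
  assumes n_pos: "n \<ge> 1"
    and sym: "\<And>i j. i < n \<Longrightarrow> j < n \<Longrightarrow> E i j \<Longrightarrow> E j i"
    and irr: "\<And>i. i < n \<Longrightarrow> \<not> E i i"
    and reg: "\<And>v. v < n \<Longrightarrow> card (nbr n E v) = k"
    and bip: "\<And>i j. i < n \<Longrightarrow> j < n \<Longrightarrow> E i j \<Longrightarrow> (i \<in> S \<longleftrightarrow> j \<notin> S)"

context bgraph
begin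

definition "Sn = {i. i < n \<and> i \<in> S}"
definition "Tn = {i. i < n \<and> i \<notin> S}"
definition "Oth i = (if i \<in> S then Tn else Sn)"

lemma fin_nbr[simp]: "finite (nbr n E i)" unfolding nbr_def by auto
lemma fin_Sn[simp]: "finite Sn" and fin_Tn[simp]: "finite Tn" unfolding Sn_def Tn_def by auto

lemma card_ST: "card Sn + card Tn = n"
proof -
  have "Sn \<union> Tn = {..<n}" "Sn \<inter> Tn = {}" unfolding Sn_def Tn_def by auto
  then show ?thesis using card_Un_disjoint[of Sn Tn] by simp
qed

lemma nbr_Oth: "i < n \<Longrightarrow> nbr n E i \<subseteq> Oth i"
  unfolding nbr_def Oth_def Sn_def Tn_def using bip by auto

lemma k_le: "i < n \<Longrightarrow> k \<le> n - 1"
proof -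
  assume i: "i < n"
  have "nbr n E i \<subseteq> {..<n} - {i}" unfolding nbr_def using irr i by auto
  then have "card (nbr n E i) \<le> card ({..<n} - {i})" by (intro card_mono) auto
  then show ?thesis using reg[OF i] i by simp
qed

lemma card_filter_sum: "finite A \<Longrightarrow> card {x\<in>A. P x} = (\<Sum>x\<in>A. if P x then 1 else 0)"
  by (simp add: sum.If_cases Int_def)

lemma nbr_S: "i \<in> Sn \<Longrightarrow> nbr n E i = {j \<in> Tn. E i j}"
  unfolding nbr_def Sn_def Tn_def using bip by auto
lemma nbr_T: "i \<in> Tn \<Longrightarrow> nbr n E i = {j \<in> Sn. E i j}"
  unfolding nbr_def Sn_def Tn_def using bip by auto

lemma balanced: assumes "k \<ge> 1" shows "card Sn = card Tn"
proof -
  have "k * card Sn = (\<Sum>i\<in>Sn. card (nbr n E i))" using reg by (simp add: Sn_def)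
  also have "\<dots> = (\<Sum>i\<in>Sn. \<Sum>j\<in>Tn. if E i j then 1 else 0)"
    by (intro sum.cong refl) (simp add: nbr_S card_filter_sum)
  also have "\<dots> = (\<Sum>j\<in>Tn. \<Sum>i\<in>Sn. if E j i then 1 else 0)"
  proof -
    have e: "\<And>i j. i \<in> Sn \<Longrightarrow> j \<in> Tn \<Longrightarrow> E i j = E j i"
      unfolding Sn_def Tn_def using sym by blast
    show ?thesis by (subst sum.swap) (intro sum.cong refl, simp add: e)
  qed
  also have "\<dots> = (\<Sum>j\<in>Tn. card (nbr n E j))"
    by (intro sum.cong refl) (simp add: nbr_T card_filter_sum)
  also have "\<dots> = k * card Tn" using reg by (simp add: Tn_def)
  finally show ?thesis using assms by simp
qed

lemma half: assumes "k \<ge> 1" "n \<ge> 1" shows "n = 2 * card Sn" "k \<le> card Sn" "card Tn = card Sn"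
proof -
  show nS: "n = 2 * card Sn" "card Tn = card Sn" using balanced[OF assms(1)] card_ST by auto
  then have "Sn \<noteq> {}" using assms by auto
  then obtain i where i: "i \<in> Sn" by auto
  then have "nbr n E i \<subseteq> Tn" using nbr_S by auto
  then have "card (nbr n E i) \<le> card Tn" by (intro card_mono) auto
  then show "k \<le> card Sn" using reg i nS by (auto simp: Sn_def)
qed

lemma card_Oth: assumes "k \<ge> 1" "i < n" shows "card (Oth i) = card Sn"
  using half[OF assms(1)] assms(2) by (simp add: Oth_def)

lemma complete_bip: assumes "k \<ge> 1" "k = card Sn" "i < n" shows "nbr n E i = Oth i"
proof (rule card_subset_eq)
  show "finite (Oth i)" by (simp add: Oth_def)
  show "nbr n E i \<subseteq> Oth i" using nbr_Oth assms by auto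
  show "card (nbr n E i) = card (Oth i)" using reg assms card_Oth by auto
qed

lemma Oth_mem: "i < n \<Longrightarrow> j \<in> Oth i \<Longrightarrow> i \<in> Oth j"
  unfolding Oth_def Sn_def Tn_def by (auto split: if_splits)

lemma Oth_lt: "j \<in> Oth i \<Longrightarrow> j < n"
  unfolding Oth_def Sn_def Tn_def by (auto split: if_splits)

definition "partner i = (THE j. j \<in> Oth i \<and> \<not> E i j)"

end

locale crownlike = bgraph +
  assumes k1: "k \<ge> 1" and km: "k + 1 = card Sn"
begin

lemma miss1: assumes "i < n" shows "\<exists>p. Oth i - nbr n E i = {p}"
proof -
  have "card (Oth i - nbr n E i) = card (Oth i) - card (nbr n E i)"
    using nbr_Oth assms by (intro card_Diff_subset) auto
  also have "\<dots> = 1" using card_Oth[OF k1 assms] reg[OF assms] km by simp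
  finally show ?thesis by (metis card_1_singletonE)
qed

lemma partner: assumes "i < n"
  shows "partner i \<in> Oth i" "\<not> E i (partner i)" "Oth i - nbr n E i = {partner i}"
proof -
  obtain p where p: "Oth i - nbr n E i = {p}" using miss1[OF assms] by blast
  have pp: "p \<in> Oth i \<and> \<not> E i p" using p Oth_lt unfolding nbr_def by blast
  have uq: "\<And>j. j \<in> Oth i \<and> \<not> E i j \<Longrightarrow> j = p" using p Oth_lt unfolding nbr_def by blast
  have "partner i = p" unfolding partner_def
  proof (rule the_equality)
    show "p \<in> Oth i \<and> \<not> E i p" by (rule pp)
  next
    fix j assume "j \<in> Oth i \<and> \<not> E i j" then show "j = p" by (rule uq)
  qed
  then show "partner i \<in> Oth i" "\<not> E i (partner i)" "Oth i - nbr n E i = {partner i}"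
    using p pp by simp_all
qed

lemma partner_lt: "i < n \<Longrightarrow> partner i < n" using partner(1) Oth_lt by blast

lemma partner_inv: assumes "i < n" shows "partner (partner i) = i"
proof -
  let ?p = "partner i"
  have p: "?p < n" "?p \<in> Oth i" "\<not> E i ?p" using partner assms partner_lt by auto
  have "i \<in> Oth ?p - nbr n E ?p" using Oth_mem[OF assms p(2)] p sym assms unfolding nbr_def by blast
  then show ?thesis using partner(3)[OF p(1)] by auto
qed

lemma nbr_partner: assumes "i < n" shows "nbr n E i = Oth i - {partner i}"
  using partner[OF assms] nbr_Oth[OF assms] by blast

end




context bgraph
begin

abbreviation "A \<equiv> adj_matrix n E"

lemma A_carrier[simp]: "A \<in> carrier_mat n n" unfolding adj_matrix_def by auto
lemma A_dim[simp]: "dim_row A = n" "dim_col A = n" unfolding adj_matrix_def by auto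
lemma A_index[simp]: "i < n \<Longrightarrow> j < n \<Longrightarrow> A $$ (i,j) = (if E i j then 1 else 0)"
  unfolding adj_matrix_def by auto

lemma mulvec: assumes v: "v \<in> carrier_vec n" and i: "i < n"
  shows "(A *\<^sub>v v) $ i = (\<Sum>j\<in>nbr n E i. v $ j)"
proof -
  have "(A *\<^sub>v v) $ i = (\<Sum>j\<in>{0..<n}. A $$ (i,j) * v $ j)"
    using v i by (simp add: scalar_prod_def mult_mat_vec_def)
  also have "\<dots> = (\<Sum>j\<in>{0..<n}. if E i j then v $ j else 0)"
    using i by (intro sum.cong) auto
  also have "\<dots> = (\<Sum>j\<in>{j\<in>{0..<n}. E i j}. v $ j)"
    by (simp only: sum.inter_filter[OF finite_atLeastLessThan])
  also have "{j\<in>{0..<n}. E i j} = nbr n E i" unfolding nbr_def by auto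
  finally show ?thesis .
qed

lemma eigen_eq: assumes "eigenvector A v e" "i < n"
  shows "e * v $ i = (\<Sum>j\<in>nbr n E i. v $ j)"
proof -
  have v: "v \<in> carrier_vec n" "A *\<^sub>v v = e \<cdot>\<^sub>v v" using assms unfolding eigenvector_def by auto
  have "(A *\<^sub>v v) $ i = e * v $ i" using v assms by simp
  then show ?thesis using mulvec[OF v(1) assms(2)] by simp
qed

lemma eigen_nz: assumes "eigenvector A v e" shows "\<exists>i<n. v $ i \<noteq> 0"
proof (rule ccontr)
  assume "\<not> ?thesis"
  moreover have "v \<in> carrier_vec n" "v \<noteq> 0\<^sub>v n" using assms unfolding eigenvector_def by auto
  ultimately show False by (metis eq_vecI carrier_vecD index_zero_vec(1,2))
qed

lemma eig_complete:
  assumes k1: "k \<ge> 1" and kc: "k = card Sn" and ev: "eigenvalue A e"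
  shows "e = 0 \<or> e = of_nat k \<or> e = - of_nat k"
proof -
  obtain v where v: "eigenvector A v e" using ev unfolding eigenvalue_def by blast
  define sS where "sS = (\<Sum>j\<in>Sn. v $ j)"
  define sT where "sT = (\<Sum>j\<in>Tn. v $ j)"
  have n1: "n \<ge> 1" using n_pos .
  have cT: "card Tn = k" using half[OF k1 n1] kc by simp
  have eS: "e * v $ i = sT" if "i \<in> Sn" for i
  proof -
    have "i < n" "Oth i = Tn" using that by (auto simp: Sn_def Oth_def)
    then show ?thesis using eigen_eq[OF v] complete_bip[OF k1 kc] sT_def by simp
  qed
  have eT: "e * v $ i = sS" if "i \<in> Tn" for i
  proof -
    have "i < n" "Oth i = Sn" using that by (auto simp: Tn_def Oth_def)
    then show ?thesis using eigen_eq[OF v] complete_bip[OF k1 kc] sS_def by simp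
  qed
  have 1: "e * sS = of_nat k * sT" unfolding sS_def using eS kc by (simp add: sum_distrib_left)
  have 2: "e * sT = of_nat k * sS" unfolding sT_def using eT cT by (simp add: sum_distrib_left)
  show ?thesis
  proof (cases "e^2 = (of_nat k)^2")
    case True
    then have "(e - of_nat k) * (e + of_nat k) = 0" by (simp add: algebra_simps power2_eq_square)
    then show ?thesis by (auto simp: eq_neg_iff_add_eq_0)
  next
    case False
    have "e^2 * sS = (of_nat k)^2 * sS" using 1 2
      by (metis (no_types, lifting) mult.assoc mult.commute power2_eq_square)
    then have s1: "sS = 0" using False by simp
    have "e^2 * sT = (of_nat k)^2 * sT" using 1 2
      by (metis (no_types, lifting) mult.assoc mult.commute power2_eq_square)
    then have s2: "sT = 0" using False by simp
    obtain i where i: "i < n" "v $ i \<noteq> 0" using eigen_nz[OF v] by blast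
    have "e * v $ i = 0"
      using eS eT s1 s2 i unfolding Sn_def Tn_def by (cases "i \<in> S") auto
    then show ?thesis using i by simp
  qed
qed

end

context crownlike
begin

lemma Sn_lt: "i \<in> Sn \<Longrightarrow> i < n" and Tn_lt: "i \<in> Tn \<Longrightarrow> i < n"
  by (auto simp: Sn_def Tn_def)

lemma partner_S: "i \<in> Sn \<Longrightarrow> partner i \<in> Tn"
  using partner(1)[of i] by (auto simp: Sn_def Tn_def Oth_def)
lemma partner_T: "i \<in> Tn \<Longrightarrow> partner i \<in> Sn"
  using partner(1)[of i] by (auto simp: Sn_def Tn_def Oth_def)

lemma eig_crown:
  assumes ev: "eigenvalue A e"
  shows "e^2 = 1 \<or> e^2 = (of_nat k)^2"
proof -
  obtain v where v: "eigenvector A v e" using ev unfolding eigenvalue_def by blast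
  define sS where "sS = (\<Sum>j\<in>Sn. v $ j)"
  define sT where "sT = (\<Sum>j\<in>Tn. v $ j)"
  have n1: "n \<ge> 1" using n_pos .
  have cT: "card Tn = k + 1" using half[OF k1 n1] km by simp
  have ei: "e * v $ i = (\<Sum>j\<in>Oth i. v $ j) - v $ partner i" if "i < n" for i
  proof -
    have "e * v $ i = (\<Sum>j\<in>Oth i - {partner i}. v $ j)" using eigen_eq[OF v that] nbr_partner[OF that] by simp
    also have "\<dots> = (\<Sum>j\<in>Oth i. v $ j) - v $ partner i"
      using partner(1)[OF that] by (subst sum_diff1) (auto simp: Oth_def)
    finally show ?thesis .
  qed
  have eS: "e * v $ i = sT - v $ partner i" if "i \<in> Sn" for i
    using ei[of i] that by (auto simp: Sn_def Oth_def sT_def)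
  have eT: "e * v $ i = sS - v $ partner i" if "i \<in> Tn" for i
    using ei[of i] that by (auto simp: Tn_def Oth_def sS_def)
  have rS: "(\<Sum>i\<in>Sn. v $ partner i) = sT" unfolding sT_def
    by (rule sum.reindex_bij_witness[where i=partner and j=partner])
       (auto simp: partner_S partner_T partner_inv Sn_lt Tn_lt)
  have rT: "(\<Sum>i\<in>Tn. v $ partner i) = sS" unfolding sS_def
    by (rule sum.reindex_bij_witness[where i=partner and j=partner])
       (auto simp: partner_S partner_T partner_inv Sn_lt Tn_lt)
  have 1: "e * sS = of_nat k * sT"
  proof -
    have "e * sS = (\<Sum>i\<in>Sn. sT - v $ partner i)" unfolding sS_def by (simp add: sum_distrib_left eS)
    also have "\<dots> = of_nat (k+1) * sT - sT" by (simp add: sum_subtractf rS km[symmetric])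
    finally show ?thesis by (simp add: algebra_simps)
  qed
  have 2: "e * sT = of_nat k * sS"
  proof -
    have "e * sT = (\<Sum>i\<in>Tn. sS - v $ partner i)" unfolding sT_def by (simp add: sum_distrib_left eT)
    also have "\<dots> = of_nat (k+1) * sS - sS" by (simp add: sum_subtractf rT cT)
    finally show ?thesis by (simp add: algebra_simps)
  qed
  show ?thesis
  proof (cases "e^2 = (of_nat k)^2")
    case True then show ?thesis by simp
  next
    case False
    have "e^2 * sS = (of_nat k)^2 * sS" using 1 2
      by (metis (no_types, lifting) mult.assoc mult.commute power2_eq_square)
    then have s1: "sS = 0" using False by simp
    have "e^2 * sT = (of_nat k)^2 * sT" using 1 2
      by (metis (no_types, lifting) mult.assoc mult.commute power2_eq_square)
    then have s2: "sT = 0" using False by simp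
    have ep: "e * v $ i = - v $ partner i" if "i < n" for i
      using eS eT s1 s2 that unfolding Sn_def Tn_def by (cases "i \<in> S") auto
    obtain i where i: "i < n" "v $ i \<noteq> 0" using eigen_nz[OF v] by blast
    have "e^2 * v $ i = e * (e * v $ i)" by (simp add: power2_eq_square)
    also have "\<dots> = - (e * v $ partner i)" using ep[OF i(1)] by simp
    also have "\<dots> = v $ i" using ep[OF partner_lt[OF i(1)]] partner_inv[OF i(1)] by simp
    finally have "e^2 * v $ i = 1 * v $ i" by simp
    then show ?thesis using i by simp
  qed
qed

end




lemma cp_nz: assumes "(M :: 'a::field mat) \<in> carrier_mat n n" shows "char_poly M \<noteq> 0"
proof
  assume "char_poly M = 0"
  then show False using degree_monic_char_poly[OF assms] by simp
qed

lemma mem_spec_iff: assumes "(M :: 'a::field mat) \<in> carrier_mat n n"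
  shows "x \<in># proots (char_poly M) \<longleftrightarrow> eigenvalue M x"
  using cp_nz[OF assms] eigenvalue_root_char_poly[OF assms] by simp

context bgraph
begin

abbreviation "spec \<equiv> adj_spectrum n E"

lemma spec_eig: "x \<in># spec \<longleftrightarrow> eigenvalue A x"
  unfolding adj_spectrum_def by (rule mem_spec_iff[OF A_carrier])

lemma tri: obtains B P Q where "similar_mat_wit A B P Q" "upper_triangular B"
  using triangularize[OF A_carrier] by blast

lemma spec_size: "size spec = n"
proof -
  obtain B P Q where b: "similar_mat_wit A B P Q" "upper_triangular B" by (rule tri)
  have "B \<in> carrier_mat n n" using similar_mat_witD2(5)[OF A_carrier b(1)] .
  then show ?thesis unfolding adj_spectrum_def spec_tri[OF b A_carrier] by (simp add: diag_mat_def)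
qed

lemma trAA: "tr (A * A) = of_nat (n * k)"
proof -
  have "tr (A * A) = (\<Sum>i<n. \<Sum>j<n. A $$ (i,j) * A $$ (j,i))"
    by (auto simp: tr_def scalar_prod_def intro!: sum.cong atLeast0LessThan)
  also have "\<dots> = (\<Sum>i<n. of_nat k)"
  proof (rule sum.cong[OF refl])
    fix i assume i: "i \<in> {..<n}"
    have "(\<Sum>j<n. A $$ (i,j) * A $$ (j,i)) = (\<Sum>j<n. if E i j then 1 else 0)"
      using i sym by (intro sum.cong refl) auto
    also have "\<dots> = of_nat (card {j\<in>{..<n}. E i j})"
      by (simp add: sum.If_cases Int_def)
    also have "{j\<in>{..<n}. E i j} = nbr n E i" by (auto simp: nbr_def)
    finally show "(\<Sum>j<n. A $$ (i,j) * A $$ (j,i)) = of_nat k" using reg i by simp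
  qed
  finally show ?thesis by simp
qed

lemma spec_sq: "(\<Sum>x\<in>#spec. x^2) = of_nat (n * k)"
proof -
  obtain B P Q where b: "similar_mat_wit A B P Q" "upper_triangular B" by (rule tri)
  have "(\<Sum>x\<in>#spec. x^2) = (\<Sum>x\<leftarrow>diag_mat B. x^2)"
    unfolding adj_spectrum_def spec_tri[OF b A_carrier] by (metis mset_map sum_mset_sum_list)
  also have "\<dots> = tr (A * A)" using tr_sq_similar[OF b(1) A_carrier b(2)] by simp
  finally show ?thesis using trAA by simp
qed

lemma k_spec: "of_nat k \<in># spec"
proof -
  have "eigenvector A ((vec n (\<lambda>_. 1::complex))) (of_nat k)"
    unfolding eigenvector_def
  proof (intro conjI)
    show "(vec n (\<lambda>_. 1::complex)) \<in> carrier_vec (dim_row A)" by simp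
    show "(vec n (\<lambda>_. 1::complex)) \<noteq> 0\<^sub>v (dim_row A)"
    proof
      assume "(vec n (\<lambda>_. 1::complex)) = 0\<^sub>v (dim_row A)"
      then have "(vec n (\<lambda>_. 1::complex)) $ 0 = 0\<^sub>v n $ 0" by simp
      then show False using n_pos by simp
    qed
    show "A *\<^sub>v (vec n (\<lambda>_. 1::complex)) = of_nat k \<cdot>\<^sub>v (vec n (\<lambda>_. 1::complex))"
    proof (rule eq_vecI)
      fix i assume "i < dim_vec (of_nat k \<cdot>\<^sub>v (vec n (\<lambda>_. 1::complex)) :: complex vec)"
      then have i: "i < n" by simp
      show "(A *\<^sub>v (vec n (\<lambda>_. 1::complex))) $ i = (of_nat k \<cdot>\<^sub>v (vec n (\<lambda>_. 1::complex))) $ i"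
      proof -
        have "(\<Sum>j\<in>nbr n E i. vec n (\<lambda>_. 1::complex) $ j) = (\<Sum>j\<in>nbr n E i. 1)"
          by (intro sum.cong) (auto simp: nbr_def)
        then show ?thesis using mulvec[of "(vec n (\<lambda>_. 1::complex))" i] i reg[OF i] by simp
      qed
    qed simp
  qed
  then show ?thesis using spec_eig eigenvalue_def by blast
qed

definition "Dm = mat_diag n (\<lambda>i. if i \<in> S then 1 else (-1 :: complex))"

lemma Dm_carrier[simp]: "Dm \<in> carrier_mat n n" unfolding Dm_def by simp

lemma DD: "Dm * Dm = 1\<^sub>m n"
  unfolding Dm_def by (subst mat_diag_mult_left[where n=n and nr=n]) (auto simp: mat_diag_def intro!: eq_matI)

lemma DAD: "(-1) \<cdot>\<^sub>m A = Dm * A * Dm"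
proof -
  have "Dm * A * Dm = Matrix.mat n n (\<lambda>(i,j). (if i \<in> S then 1 else -1) * A $$ (i,j) * (if j \<in> S then 1 else (-1::complex)))"
    unfolding Dm_def mat_diag_mult_left[OF A_carrier]
    by (subst mat_diag_mult_right[of _ n]) (auto intro!: eq_matI)
  also have "\<dots> = (-1) \<cdot>\<^sub>m A"
  proof (rule eq_matI)
    fix i j assume "i < dim_row ((-1) \<cdot>\<^sub>m A)" "j < dim_col ((-1) \<cdot>\<^sub>m A)"
    then have ij: "i < n" "j < n" by auto
    show "Matrix.mat n n (\<lambda>(i,j). (if i \<in> S then 1 else -1) * A $$ (i,j) * (if j \<in> S then 1 else (-1::complex))) $$ (i,j) = ((-1) \<cdot>\<^sub>m A) $$ (i,j)"
      using ij bip[OF ij] by auto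
  qed auto
  finally show ?thesis by simp
qed

lemma spec_sym: "image_mset uminus spec = spec"
proof -
  obtain B P Q where b: "similar_mat_wit A B P Q" "upper_triangular B" by (rule tri)
  have Bc: "B \<in> carrier_mat n n" using similar_mat_witD2(5)[OF A_carrier b(1)] .
  have s1: "similar_mat_wit ((-1) \<cdot>\<^sub>m A) A Dm Dm"
  proof -
    have c: "Dm * A * Dm \<in> carrier_mat n n" by (simp flip: DAD)
    show ?thesis by (rule similar_mat_witI[where n=n]) (auto simp: DD DAD c)
  qed
  then have cpe: "char_poly ((-1) \<cdot>\<^sub>m A) = char_poly A"
    by (intro char_poly_similar) (auto simp: similar_mat_def)
  have s2: "similar_mat_wit ((-1) \<cdot>\<^sub>m A) ((-1) \<cdot>\<^sub>m B) P Q"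
    by (rule similar_mat_wit_smult[OF b(1)])
  have ut: "upper_triangular ((-1) \<cdot>\<^sub>m B)" using b(2) Bc unfolding upper_triangular_def by auto
  have "proots (char_poly ((-1) \<cdot>\<^sub>m A)) = mset (diag_mat ((-1) \<cdot>\<^sub>m B))"
    by (rule spec_tri[OF s2 ut, of n]) simp
  also have "diag_mat ((-1) \<cdot>\<^sub>m B) = map uminus (diag_mat B)"
    using Bc by (auto simp: diag_mat_def)
  finally show ?thesis using spec_tri[OF b A_carrier] cpe unfolding adj_spectrum_def
    by simp
qed

end




lemma prod_two_vals:
  assumes "\<forall>a\<in>set ds. a = 0 \<or> a = (- N :: complex)"
  shows "(\<Prod>a\<leftarrow>ds. a + c) = (c - N) ^ length (filter (\<lambda>a. a = - N) ds) * c ^ (length ds - length (filter (\<lambda>a. a = - N) ds))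
       \<and> sum_list ds = - N * of_nat (length (filter (\<lambda>a. a = - N) ds))"
  using assms
proof (induction ds)
  case Nil then show ?case by simp
next
  case (Cons a ds)
  let ?f = "length (filter (\<lambda>a. a = - N) ds)"
  have le: "?f \<le> length ds" by simp
  show ?case
  proof (cases "a = - N")
    case True
    then show ?thesis using Cons by (simp add: algebra_simps)
  next
    case False
    then have a0: "a = 0" using Cons.prems by auto
    have "Suc (length ds) - ?f = Suc (length ds - ?f)" by (rule Suc_diff_le[OF le])
    then show ?thesis using Cons a0 by (simp add: algebra_simps)
  qed
qed

definition NJ :: "nat \<Rightarrow> complex mat" where "NJ n = Matrix.mat n n (\<lambda>_. -1)"

lemma NJ_carrier[simp]: "NJ n \<in> carrier_mat n n" unfolding NJ_def by simp
lemma NJ_dim[simp]: "dim_row (NJ n) = n" "dim_col (NJ n) = n" unfolding NJ_def by simp_all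

lemma NJ_eig: assumes "eigenvalue (NJ n) e" shows "e = 0 \<or> e = - of_nat n"
proof -
  obtain v where v: "v \<in> carrier_vec n" "v \<noteq> 0\<^sub>v n" "NJ n *\<^sub>v v = e \<cdot>\<^sub>v v"
    using assms unfolding eigenvalue_def eigenvector_def by (auto simp: NJ_def)
  define s where "s = (\<Sum>j<n. v $ j)"
  have ei: "e * v $ i = - s" if "i < n" for i
  proof -
    have "(NJ n *\<^sub>v v) $ i = (e \<cdot>\<^sub>v v) $ i" using v(3) by simp
    also have "\<dots> = e * v $ i" using v(1) that by simp
    finally have "(NJ n *\<^sub>v v) $ i = e * v $ i" .
    moreover have "(NJ n *\<^sub>v v) $ i = - s"
      using v(1) that by (simp add: NJ_def scalar_prod_def s_def sum_negf atLeast0LessThan)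
    ultimately show ?thesis by simp
  qed
  have "e * s = (\<Sum>j<n. e * v $ j)" by (simp add: s_def sum_distrib_left)
  also have "\<dots> = (\<Sum>j<n. - s)" using ei by simp
  also have "\<dots> = - of_nat n * s" by simp
  finally have es: "e * s = - of_nat n * s" .
  obtain i where i: "i < n" "v $ i \<noteq> 0"
    using v by (metis eq_vecI carrier_vecD index_zero_vec(1,2))
  show ?thesis
  proof (cases "s = 0")
    case True then show ?thesis using ei[OF i(1)] i(2) by simp
  next
    case False
    from es have "(e + of_nat n) * s = 0" by (simp add: algebra_simps)
    then show ?thesis using False by (simp add: eq_neg_iff_add_eq_0)
  qed
qed

lemma det_NJ: assumes "n \<ge> 1" shows "det (NJ n + c \<cdot>\<^sub>m 1\<^sub>m n) = (c - of_nat n) * c ^ (n - 1)"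
proof -
  obtain B P Q where b: "similar_mat_wit (NJ n) B P Q" "upper_triangular B"
    using triangularize[OF NJ_carrier] by blast
  have Bc: "B \<in> carrier_mat n n" using similar_mat_witD2(5)[OF NJ_carrier b(1)] .
  have vals: "\<forall>a\<in>set (diag_mat B). a = 0 \<or> a = - of_nat n"
  proof
    fix a assume "a \<in> set (diag_mat B)"
    then have "a \<in># proots (char_poly (NJ n))" using spec_tri[OF b NJ_carrier] by simp
    then show "a = 0 \<or> a = - of_nat n" using NJ_eig mem_spec_iff[OF NJ_carrier] by blast
  qed
  have "sum_list (diag_mat B) = tr (NJ n)" using tr_similar[OF b(1) NJ_carrier] tr_upper[of B] by simp
  also have "\<dots> = - of_nat n" by (simp add: tr_def NJ_def)
  finally have sl: "sum_list (diag_mat B) = - of_nat n" .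
  note pt = prod_two_vals[OF vals, of c]
  let ?f = "length (filter (\<lambda>a. a = - of_nat n) (diag_mat B))"
  have "- of_nat n * of_nat ?f = (- of_nat n :: complex)" using pt sl by simp
  then have f1: "?f = 1" using assms by simp
  have len: "length (diag_mat B) = n" using Bc by (simp add: diag_mat_def)
  show ?thesis using det_shift[OF b NJ_carrier, of c] pt f1 len by simp
qed




lemma rank1_id:
  fixes M :: "complex mat"
  assumes M: "M \<in> carrier_mat n n" and rs: "\<And>i. i < n \<Longrightarrow> (\<Sum>l<n. M $$ (i,l)) = c"
  shows "c \<cdot>\<^sub>m (M + NJ n) = M * (NJ n + c \<cdot>\<^sub>m 1\<^sub>m n)"
proof (rule eq_matI)
  fix i j assume "i < dim_row (M * (NJ n + c \<cdot>\<^sub>m 1\<^sub>m n))" "j < dim_col (M * (NJ n + c \<cdot>\<^sub>m 1\<^sub>m n))"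
  then have ij: "i < n" "j < n" using M by auto
  have "(M * (NJ n + c \<cdot>\<^sub>m 1\<^sub>m n)) $$ (i,j) = (\<Sum>l\<in>{0..<n}. M $$ (i,l) * ((NJ n + c \<cdot>\<^sub>m 1\<^sub>m n) $$ (l,j)))"
    using M ij by (simp add: scalar_prod_def)
  also have "\<dots> = (\<Sum>l\<in>{0..<n}. (if l = j then c * M $$ (i,l) else 0) - M $$ (i,l))"
    using ij by (intro sum.cong refl) (auto simp: NJ_def algebra_simps)
  also have "\<dots> = c * M $$ (i,j) - c"
    using ij rs[OF ij(1)] by (simp add: sum_subtractf atLeast0LessThan)
  also have "\<dots> = (c \<cdot>\<^sub>m (M + NJ n)) $$ (i,j)" using M ij by (simp add: NJ_def algebra_simps)
  finally show "(c \<cdot>\<^sub>m (M + NJ n)) $$ (i,j) = (M * (NJ n + c \<cdot>\<^sub>m 1\<^sub>m n)) $$ (i,j)" by simp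
qed (use M in auto)

lemma poly_eq_except:
  fixes p q :: "complex poly"
  assumes "\<And>x. x \<noteq> a \<Longrightarrow> poly p x = poly q x"
  shows "p = q"
proof (rule ccontr)
  assume "p \<noteq> q"
  then have "p - q \<noteq> 0" by simp
  then have "finite {x. poly (p - q) x = 0}" by (rule poly_roots_finite)
  moreover have "UNIV - {a} \<subseteq> {x. poly (p - q) x = 0}" using assms by auto
  ultimately have "finite (UNIV - {a} :: complex set)" by (rule finite_subset[rotated])
  then have "finite (UNIV :: complex set)" by simp
  then show False using infinite_UNIV_char_0 by blast
qed

context bgraph
begin

abbreviation "Ac \<equiv> adj_matrix n (complement_graph n E)"

lemma Ac_carrier[simp]: "Ac \<in> carrier_mat n n" unfolding adj_matrix_def by auto
lemma Ac_dim[simp]: "dim_row Ac = n" "dim_col Ac = n" unfolding adj_matrix_def by auto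

lemma charm: "- (char_matrix Ac x) = (A + (x + 1) \<cdot>\<^sub>m 1\<^sub>m n) + NJ n"
proof (rule eq_matI)
  fix i j assume "i < dim_row ((A + (x + 1) \<cdot>\<^sub>m 1\<^sub>m n) + NJ n)" "j < dim_col ((A + (x + 1) \<cdot>\<^sub>m 1\<^sub>m n) + NJ n)"
  then have ij: "i < n" "j < n" by (auto simp: NJ_def)
  show "(- (char_matrix Ac x)) $$ (i,j) = ((A + (x + 1) \<cdot>\<^sub>m 1\<^sub>m n) + NJ n) $$ (i,j)"
    using ij irr[OF ij(1)] by (auto simp: char_matrix_def NJ_def adj_matrix_def complement_graph_def)
qed (auto simp: char_matrix_def NJ_def)

lemma rowsum: assumes i: "i < n" shows "(\<Sum>l<n. (A + y \<cdot>\<^sub>m 1\<^sub>m n) $$ (i,l)) = of_nat k + y"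
proof -
  have "(\<Sum>l<n. (A + y \<cdot>\<^sub>m 1\<^sub>m n) $$ (i,l)) = (\<Sum>l<n. (if E i l then 1 else 0) + (if l = i then y else 0))"
    using i by (intro sum.cong refl) auto
  also have "\<dots> = of_nat (card {l\<in>{..<n}. E i l}) + y"
    using i by (simp add: sum.distrib sum.If_cases Int_def)
  also have "{l\<in>{..<n}. E i l} = nbr n E i" by (auto simp: nbr_def)
  finally show ?thesis using reg[OF i] by simp
qed

lemma pointwise:
  assumes b: "similar_mat_wit A B P Q" "upper_triangular B"
  and c0: "of_nat k + x + 1 \<noteq> 0"
  shows "(of_nat k + x + 1) * poly (char_poly Ac) x = (of_nat k + x + 1 - of_nat n) * (\<Prod>d\<leftarrow>diag_mat B. d + (x + 1))"
proof -
  define c where "c = of_nat k + x + 1"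
  define M where "M = A + (x + 1) \<cdot>\<^sub>m 1\<^sub>m n"
  have Mc: "M \<in> carrier_mat n n" unfolding M_def by simp
  have rs: "\<And>i. i < n \<Longrightarrow> (\<Sum>l<n. M $$ (i,l)) = c" unfolding M_def c_def using rowsum by simp
  have "poly (char_poly Ac) x = det (M + NJ n)"
    unfolding char_poly_matrix[OF Ac_carrier] charm M_def ..
  then have "c ^ n * poly (char_poly Ac) x = det (c \<cdot>\<^sub>m (M + NJ n))" using Mc by simp
  also have "\<dots> = det M * det (NJ n + c \<cdot>\<^sub>m 1\<^sub>m n)"
  proof -
    have r: "c \<cdot>\<^sub>m (M + NJ n) = M * (NJ n + c \<cdot>\<^sub>m 1\<^sub>m n)" by (rule rank1_id[OF Mc rs])
    show ?thesis unfolding r by (rule det_mult[OF Mc]) simp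
  qed
  also have "det M = (\<Prod>d\<leftarrow>diag_mat B. d + (x + 1))" unfolding M_def by (rule det_shift[OF b A_carrier])
  also have "det (NJ n + c \<cdot>\<^sub>m 1\<^sub>m n) = (c - of_nat n) * c ^ (n - 1)" by (rule det_NJ[OF n_pos])
  finally have e: "c ^ n * poly (char_poly Ac) x = (\<Prod>d\<leftarrow>diag_mat B. d + (x + 1)) * ((c - of_nat n) * c ^ (n - 1))" .
  have "c ^ n = c * c ^ (n - 1)" using n_pos by (cases n) auto
  then have "c ^ (n - 1) * (c * poly (char_poly Ac) x) = c ^ (n - 1) * ((c - of_nat n) * (\<Prod>d\<leftarrow>diag_mat B. d + (x + 1)))"
    using e by (simp add: algebra_simps)
  moreover have "c ^ (n - 1) \<noteq> 0" using c0 c_def by simp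
  ultimately have "c * poly (char_poly Ac) x = (c - of_nat n) * (\<Prod>d\<leftarrow>diag_mat B. d + (x + 1))"
    by (metis mult_left_cancel)
  then show ?thesis unfolding c_def .
qed

lemma spec_compl:
  "adj_spectrum n (complement_graph n E) = add_mset (of_nat n - 1 - of_nat k) (image_mset (\<lambda>d. - 1 - d) (spec - {#of_nat k#}))"
proof -
  obtain B P Q where b: "similar_mat_wit A B P Q" "upper_triangular B" by (rule tri)
  define ds where "ds = diag_mat B"
  have sp: "spec = mset ds" unfolding ds_def adj_spectrum_def by (rule spec_tri[OF b A_carrier])
  define p1 where "p1 = char_poly Ac * [:1 + of_nat k, 1:]"
  define p2 where "p2 = [:1 + of_nat k - of_nat n, 1:] * (\<Prod>d\<leftarrow>ds. [:- (- 1 - d), 1:])"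
  have "p1 = p2"
  proof (rule poly_eq_except[of "- 1 - of_nat k"])
    fix x :: complex assume xa: "x \<noteq> - 1 - of_nat k"
    have c0: "of_nat k + x + 1 \<noteq> 0"
    proof
      assume h: "of_nat k + x + 1 = 0"
      have "x = (of_nat k + x + 1) - 1 - of_nat k" by simp
      also have "\<dots> = - 1 - of_nat k" using h by simp
      finally show False using xa by simp
    qed
    have "poly p1 x = (of_nat k + x + 1) * poly (char_poly Ac) x" unfolding p1_def by (simp add: algebra_simps)
    also have "\<dots> = (of_nat k + x + 1 - of_nat n) * (\<Prod>d\<leftarrow>ds. d + (x + 1))"
      unfolding ds_def by (rule pointwise[OF b c0])
    also have "\<dots> = poly p2 x" unfolding p2_def by (simp add: poly_prod_list o_def algebra_simps)
    finally show "poly p1 x = poly p2 x" .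
  qed
  have "proots p1 = proots (char_poly Ac) + {#- 1 - of_nat k#}"
    unfolding p1_def by (subst proots_mult) (auto simp: cp_nz[OF Ac_carrier] algebra_simps)
  moreover have "proots p2 = {#of_nat n - 1 - of_nat k#} + mset (map (\<lambda>d. - 1 - d) ds)"
  proof -
    have pr: "proots (\<Prod>d\<leftarrow>ds. [:- (- 1 - d), 1:]) = mset (map (\<lambda>d. - 1 - d) ds)"
      using proots_linear_list[of "map (\<lambda>d. - 1 - d) ds"] by (simp add: o_def)
    have "proots p2 = proots [:1 + of_nat k - of_nat n, 1:] + proots (\<Prod>d\<leftarrow>ds. [:- (- 1 - d), 1:])"
      unfolding p2_def by (rule proots_mult) (auto simp: prod_list_zero_iff)
    then show ?thesis using pr by (simp add: algebra_simps)
  qed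
  moreover have "mset (map (\<lambda>d. - 1 - d) ds) = add_mset (- 1 - of_nat k) (image_mset (\<lambda>d. - 1 - d) (spec - {#of_nat k#}))"
  proof -
    have "spec = add_mset (of_nat k) (spec - {#of_nat k#})" using k_spec by simp
    then have "image_mset (\<lambda>d. - 1 - d) spec = add_mset (- 1 - of_nat k) (image_mset (\<lambda>d. - 1 - d) (spec - {#of_nat k#}))"
      by (metis image_mset_add_mset)
    then show ?thesis using sp by simp
  qed
  ultimately show ?thesis using \<open>p1 = p2\<close> unfolding adj_spectrum_def by simp
qed

end




definition ff :: "complex \<Rightarrow> real" where
  "ff d = (cmod (1 + d) + cmod (1 - d)) / 2 - cmod d"

lemma ff_nonneg: "ff d \<ge> 0"
proof -
  have "cmod ((1 + d) - (1 - d)) \<le> cmod (1 + d) + cmod (1 - d)" by (rule norm_triangle_ineq4)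
  moreover have "(1 + d) - (1 - d) = 2 * d" by simp
  ultimately have "2 * cmod d \<le> cmod (1 + d) + cmod (1 - d)" by (simp add: norm_mult)
  then show ?thesis unfolding ff_def by simp
qed

lemma ff_0: "ff 0 = 1" unfolding ff_def by simp

lemma ff_nat: assumes "j \<ge> 1" shows "ff (of_nat j) = 0" "ff (- of_nat j) = 0"
proof -
  have a: "1 + (of_nat j :: complex) = of_real (1 + real j)" by simp
  have b: "1 - (of_nat j :: complex) = of_real (1 - real j)" by simp
  have c: "cmod (of_nat j) = real j" by simp
  have d: "1 - (- of_nat j :: complex) = of_real (1 + real j)" by simp
  have e: "1 + (- of_nat j :: complex) = of_real (1 - real j)" by simp
  have "\<bar>1 - real j\<bar> = real j - 1" using assms by simp
  then show "ff (of_nat j) = 0" "ff (- of_nat j) = 0" unfolding ff_def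
    by (simp_all only: a b c d e norm_of_real norm_minus_cancel) simp_all
qed

lemma msum_split: "(\<Sum>x\<in>#M. (a x + b x) / 2 - c x) = ((\<Sum>x\<in>#M. a x) + (\<Sum>x\<in>#M. b x)) / 2 - (\<Sum>x\<in>#M. (c x :: real))"
  by (induction M) (auto simp: algebra_simps add_divide_distrib)

lemma msum_nonneg: "(\<And>x. f x \<ge> 0) \<Longrightarrow> (\<Sum>x\<in>#M. (f x :: real)) \<ge> 0"
  by (induction M) (auto intro: add_nonneg_nonneg)

lemma msum_re: "(\<Sum>x\<in>#M. 1 - Re (g x) / K) = real (size M) - Re (\<Sum>x\<in>#M. (g x :: complex)) / K"
  by (induction M) (auto simp: algebra_simps add_divide_distrib)

context bgraph
begin

lemma energy_diff:
  "graph_energy n (complement_graph n E) - graph_energy n E = real n - 2 - 2 * real k + (\<Sum>d\<in>#spec. ff d)"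
proof -
  define R where "R = spec - {#of_nat k#}"
  have sR: "spec = add_mset (of_nat k) R" unfolding R_def using k_spec by simp
  have kn: "k \<le> n - 1" using k_le n_pos by (cases n) auto
  have nk: "(of_nat n - 1 - of_nat k :: complex) = of_nat (n - 1 - k)" using kn n_pos by (simp add: of_nat_diff)
  have E1: "graph_energy n (complement_graph n E) = real (n - 1 - k) + (\<Sum>d\<in>#R. cmod (1 + d))"
  proof -
    have sc: "adj_spectrum n (complement_graph n E) = add_mset (of_nat n - 1 - of_nat k) (image_mset (\<lambda>d. - 1 - d) R)"
      using spec_compl unfolding R_def .
    have "graph_energy n (complement_graph n E) = cmod (of_nat n - 1 - of_nat k) + (\<Sum>x\<in>#image_mset (\<lambda>d. - 1 - d) R. cmod x)"
      unfolding graph_energy_def sc by simp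
    also have "(\<Sum>x\<in>#image_mset (\<lambda>d. - 1 - d) R. cmod x) = (\<Sum>d\<in>#R. cmod (- 1 - d))"
      by (simp only: multiset.map_comp o_def)
    finally have "graph_energy n (complement_graph n E) = cmod (of_nat n - 1 - of_nat k) + (\<Sum>d\<in>#R. cmod (- 1 - d))" .
    also have "(\<Sum>d\<in>#R. cmod (- 1 - d)) = (\<Sum>d\<in>#R. cmod (1 + d))"
    proof -
      have "cmod (- 1 - d) = cmod (1 + d)" for d :: complex
      proof -
        have e: "- 1 - d = - (1 + d)" by simp
        show ?thesis by (simp only: e norm_minus_cancel)
      qed
      then show ?thesis by simp
    qed
    finally show ?thesis using nk by simp
  qed
  have S1: "(\<Sum>d\<in>#spec. cmod (1 + d)) = 1 + real k + (\<Sum>d\<in>#R. cmod (1 + d))"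
  proof -
    have "cmod (1 + of_nat k) = 1 + real k"
      by (metis norm_of_nat of_nat_1 of_nat_add)
    then show ?thesis unfolding sR by simp
  qed
  have sym1: "(\<Sum>d\<in>#spec. cmod (1 - d)) = (\<Sum>d\<in>#spec. cmod (1 + d))"
  proof -
    have "(\<Sum>d\<in>#spec. cmod (1 + d)) = (\<Sum>d\<in>#image_mset uminus spec. cmod (1 + d))" using spec_sym by simp
    also have "\<dots> = (\<Sum>d\<in>#spec. cmod (1 - d))" by (simp only: multiset.map_comp o_def diff_conv_add_uminus)
    finally show ?thesis by simp
  qed
  have "(\<Sum>d\<in>#spec. ff d) = ((\<Sum>d\<in>#spec. cmod (1 + d)) + (\<Sum>d\<in>#spec. cmod (1 - d))) / 2 - (\<Sum>d\<in>#spec. cmod d)"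
    unfolding ff_def by (rule msum_split)
  also have "\<dots> = (\<Sum>d\<in>#spec. cmod (1 + d)) - graph_energy n E"
  proof -
    have h: "\<And>X Y::real. (X + X) / 2 - Y = X - Y" by simp
    show ?thesis by (simp only: sym1 h graph_energy_def)
  qed
  finally have "(\<Sum>d\<in>#spec. ff d) = 1 + real k + (\<Sum>d\<in>#R. cmod (1 + d)) - graph_energy n E" using S1 by simp
  then show ?thesis using E1 kn n_pos by (simp add: of_nat_diff)
qed

lemma ff_sum_ge: "(\<Sum>d\<in>#spec. ff d) \<ge> ff (of_nat k)"
proof -
  have "spec = add_mset (of_nat k) (spec - {#of_nat k#})" using k_spec by simp
  then have "(\<Sum>d\<in>#spec. ff d) = ff (of_nat k) + (\<Sum>d\<in>#spec - {#of_nat k#}. ff d)"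
    by (metis image_mset_add_mset sum_mset.add_mset)
  then show ?thesis using msum_nonneg[of ff, OF ff_nonneg] by simp
qed

lemma diff_k0: assumes "k = 0" "n \<ge> 2"
  shows "graph_energy n (complement_graph n E) - graph_energy n E > 0"
  using energy_diff ff_sum_ge ff_0 assms n_pos by simp

lemma diff_small: assumes "k \<ge> 1" "k + 2 \<le> card Sn"
  shows "graph_energy n (complement_graph n E) - graph_energy n E > 0"
proof -
  have "n = 2 * card Sn" using half[OF assms(1) n_pos] by simp
  then have "real n - 2 - 2 * real k \<ge> 2" using assms by simp
  then show ?thesis using energy_diff msum_nonneg[of ff spec, OF ff_nonneg] by simp
qed

lemma spec_full: assumes "k \<ge> 1" "k = card Sn" "x \<in># spec"
  shows "x = 0 \<or> x = of_nat k \<or> x = - of_nat k"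
  using eig_complete[OF assms(1,2)] assms(3) spec_eig by blast

lemma diff_full: assumes k1: "k \<ge> 1" and kc: "k = card Sn"
  shows "graph_energy n (complement_graph n E) - graph_energy n E = 2 * real k - 4"
proof -
  have n2: "n = 2 * k" using half[OF k1 n_pos] kc by simp
  have "image_mset ff spec = image_mset (\<lambda>d. 1 - Re (d^2) / (real k)^2) spec"
  proof (rule image_mset_cong)
    fix d assume "d \<in># spec"
    then have "d = 0 \<or> d = of_nat k \<or> d = - of_nat k" by (rule spec_full[OF k1 kc])
    then show "ff d = 1 - Re (d^2) / (real k)^2"
    proof (elim disjE)
      assume "d = of_nat k" then show ?thesis using ff_nat[OF k1] k1
        by (simp del: of_nat_power add: of_nat_power[symmetric])
    next
      assume "d = - of_nat k" then show ?thesis using ff_nat[OF k1] k1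
        by (simp del: of_nat_power add: of_nat_power[symmetric])
    qed (simp add: ff_0)
  qed
  then have "(\<Sum>d\<in>#spec. ff d) = real (size spec) - Re (\<Sum>d\<in>#spec. d^2) / (real k)^2"
    using msum_re by simp
  also have "\<dots> = real n - real (n * k) / (real k)^2" using spec_size spec_sq by simp
  also have "\<dots> = real n - 2" using n2 k1 by (simp add: power2_eq_square)
  finally show ?thesis using energy_diff n2 by simp
qed

end

context crownlike
begin

lemma spec_crown: assumes "x \<in># spec"
  shows "x = 1 \<or> x = - 1 \<or> x = of_nat k \<or> x = - of_nat k"
proof -
  have "x^2 = 1 \<or> x^2 = (of_nat k)^2" using eig_crown assms spec_eig by blast
  then show ?thesis
  proof
    assume "x^2 = 1"
    then have "(x - 1) * (x + 1) = 0" by (simp add: algebra_simps power2_eq_square)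
    then show ?thesis by (auto simp: eq_neg_iff_add_eq_0)
  next
    assume "x^2 = (of_nat k)^2"
    then have "(x - of_nat k) * (x + of_nat k) = 0" by (simp add: algebra_simps power2_eq_square)
    then show ?thesis by (auto simp: eq_neg_iff_add_eq_0)
  qed
qed

lemma diff_crown: "graph_energy n (complement_graph n E) - graph_energy n E = 0"
proof -
  have n2: "n = 2 * (k + 1)" using half[OF k1 n_pos] km by simp
  have "image_mset ff spec = image_mset (\<lambda>_. 0) spec"
  proof (rule image_mset_cong)
    fix d assume "d \<in># spec"
    then have "d = 1 \<or> d = - 1 \<or> d = of_nat k \<or> d = - of_nat k" by (rule spec_crown)
    then show "ff d = 0" using ff_nat[OF k1] ff_nat[of 1] by auto
  qed
  then have "(\<Sum>d\<in>#spec. ff d) = 0" by simp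
  then show ?thesis using energy_diff n2 by simp
qed

end




lemma iso_card: "graph_iso n E N F \<Longrightarrow> n = N"
  unfolding graph_iso_def using bij_betw_same_card by fastforce

lemma iso_deg:
  assumes "graph_iso n E N F" "\<And>x. x < N \<Longrightarrow> card {w. w < N \<and> F x w} = d" "v < n"
  shows "card (nbr n E v) = d"
proof -
  obtain f where f: "bij_betw f {0..<n} {0..<N}" "\<And>i j. i < n \<Longrightarrow> j < n \<Longrightarrow> E i j \<longleftrightarrow> F (f i) (f j)"
    using assms(1) unfolding graph_iso_def by blast
  have fv: "f v < N" using bij_betw_apply[OF f(1)] assms(3) by simp
  have "f ` nbr n E v = {w. w < N \<and> F (f v) w}"
  proof
    show "f ` nbr n E v \<subseteq> {w. w < N \<and> F (f v) w}"
    proof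
      fix w assume "w \<in> f ` nbr n E v"
      then obtain u where u: "u < n" "E v u" "w = f u" unfolding nbr_def by blast
      have "f u \<in> {0..<N}" using bij_betw_apply[OF f(1)] u(1) by simp
      then show "w \<in> {w. w < N \<and> F (f v) w}" using u f(2)[OF assms(3) u(1)] by simp
    qed
    show "{w. w < N \<and> F (f v) w} \<subseteq> f ` nbr n E v"
    proof
      fix w assume w: "w \<in> {w. w < N \<and> F (f v) w}"
      have "w \<in> f ` {0..<n}" using w bij_betw_imp_surj_on[OF f(1)] by simp
      then obtain u where u0: "u \<in> {0..<n}" "w = f u" by blast
      then have u: "u < n" "w = f u" by auto
      then show "w \<in> f ` nbr n E v" using w f(2)[OF assms(3) u(1)] unfolding nbr_def by auto
    qed
  qed
  moreover have "inj_on f (nbr n E v)"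
    using f(1) unfolding bij_betw_def by (rule inj_on_subset[OF conjunct1]) (auto simp: nbr_def)
  ultimately show ?thesis using card_image assms(2)[OF fv] by metis
qed

lemma four: "{0..<4::nat} = {0,1,2,3}" by (auto simp: numeral_eq_Suc atLeastLessThanSuc)

lemma lt4: "(w::nat) < 4 \<longleftrightarrow> w = 0 \<or> w = 1 \<or> w = 2 \<or> w = 3" by auto

lemma C4_par: assumes "i < 4" "j < 4" shows "C4 i j \<longleftrightarrow> (even i \<longleftrightarrow> odd j)"
proof -
  have "i = 0 \<or> i = 1 \<or> i = 2 \<or> i = 3" "j = 0 \<or> j = 1 \<or> j = 2 \<or> j = 3" using assms lt4 by auto
  then show ?thesis by (elim disjE; simp add: C4_def)
qed

lemma C4_deg: assumes "x < 4" shows "card {w. w < 4 \<and> C4 x w} = 2"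
proof -
  have "{w. w < 4 \<and> C4 x w} = {w. w < 4 \<and> (even x \<longleftrightarrow> odd w)}" using C4_par assms by auto
  moreover have "{w. w < 4 \<and> odd w} = {1, 3::nat}" by (auto simp: lt4)
  moreover have "{w. w < 4 \<and> even w} = {0, 2::nat}" by (auto simp: lt4)
  ultimately show ?thesis by (cases "even x") auto
qed

lemma crown_deg: assumes "x < 2 * t" shows "card {w. w < 2 * t \<and> crown t x w} = t - 1"
proof (cases "x < t")
  case True
  then have "{w. w < 2 * t \<and> crown t x w} = {t..<2*t} - {x + t}" unfolding crown_def by auto
  then show ?thesis using True by simp
next
  case False
  then have "{w. w < 2 * t \<and> crown t x w} = {0..<t} - {x - t}" using assms unfolding crown_def by auto
  then show ?thesis using False assms by simp
qed

lemma bij_from_inj: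
  fixes f :: "nat \<Rightarrow> nat"
  assumes "inj_on f {0..<n}" "\<And>i. i < n \<Longrightarrow> f i < N" "n = N"
  shows "bij_betw f {0..<n} {0..<N}"
  unfolding bij_betw_def
proof
  show "inj_on f {0..<n}" by fact
  show "f ` {0..<n} = {0..<N}"
  proof (rule card_subset_eq)
    show "f ` {0..<n} \<subseteq> {0..<N}" using assms(2) by auto
    show "card (f ` {0..<n}) = card {0..<N}" using card_image[OF assms(1)] assms(3) by simp
  qed simp
qed

context bgraph
begin

lemma iso_C4: assumes k1: "k \<ge> 1" and kc: "k = card Sn" and k2: "k = 2"
  shows "graph_iso n E 4 C4"
proof -
  have n4: "n = 4" and cT: "card Tn = 2" using half[OF k1 n_pos] kc k2 by auto
  obtain g where g: "bij_betw g Sn {0..<2::nat}" using ex_bij_betw_finite_nat[OF fin_Sn] kc k2 by auto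
  obtain h where h: "bij_betw h Tn {0..<2::nat}" using ex_bij_betw_finite_nat[OF fin_Tn] cT by auto
  define f where "f x = (if x \<in> S then 2 * g x else 2 * h x + 1)" for x
  have gS: "x \<in> Sn \<Longrightarrow> g x < 2" for x using bij_betw_apply[OF g] by simp
  have hT: "x \<in> Tn \<Longrightarrow> h x < 2" for x using bij_betw_apply[OF h] by simp
  have flt: "f x < 4" if "x < n" for x
    using gS[of x] hT[of x] that unfolding f_def Sn_def Tn_def by auto
  have fpar: "even (f x) \<longleftrightarrow> x \<in> S" for x unfolding f_def by auto
  have inj: "inj_on f {0..<n}"
  proof
    fix x y assume x: "x \<in> {0..<n}" and y: "y \<in> {0..<n}" and e: "f x = f y"
    have same: "x \<in> S \<longleftrightarrow> y \<in> S" using fpar e by metis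
    show "x = y"
    proof (cases "x \<in> S")
      case True
      then have "g x = g y" "x \<in> Sn" "y \<in> Sn" using e same x y unfolding f_def Sn_def by auto
      then show ?thesis using g unfolding bij_betw_def inj_on_def by blast
    next
      case False
      then have "h x = h y" "x \<in> Tn" "y \<in> Tn" using e same x y unfolding f_def Tn_def by auto
      then show ?thesis using h unfolding bij_betw_def inj_on_def by blast
    qed
  qed
  have adj: "E i j \<longleftrightarrow> C4 (f i) (f j)" if ij: "i < n" "j < n" for i j
  proof -
    have "E i j \<longleftrightarrow> j \<in> Oth i" using complete_bip[OF k1 kc ij(1)] ij unfolding nbr_def by auto
    also have "\<dots> \<longleftrightarrow> (i \<in> S \<longleftrightarrow> j \<notin> S)" using ij unfolding Oth_def Sn_def Tn_def by auto
    also have "\<dots> \<longleftrightarrow> C4 (f i) (f j)" using C4_par[OF flt[OF ij(1)] flt[OF ij(2)]] fpar by auto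
    finally show ?thesis .
  qed
  show ?thesis unfolding graph_iso_def using bij_from_inj[OF inj flt n4] adj n4 by blast
qed

end

context crownlike
begin

lemma iso_crown: "graph_iso n E (2 * (k + 1)) (crown (k + 1))"
proof -
  define m where "m = k + 1"
  have n2: "n = 2 * m" and cT: "card Tn = m" using half[OF k1 n_pos] km m_def by auto
  obtain g where g: "bij_betw g Sn {0..<m}" using ex_bij_betw_finite_nat[OF fin_Sn] km m_def by auto
  define f where "f x = (if x \<in> S then g x else m + g (partner x))" for x
  have gS: "x \<in> Sn \<Longrightarrow> g x < m" for x using bij_betw_apply[OF g] by simp
  have ginj: "x \<in> Sn \<Longrightarrow> y \<in> Sn \<Longrightarrow> g x = g y \<Longrightarrow> x = y" for x y
    using g unfolding bij_betw_def inj_on_def by blast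
  have pS: "x < n \<Longrightarrow> x \<notin> S \<Longrightarrow> partner x \<in> Sn" for x using partner_T unfolding Tn_def by auto
  have flt: "f x < 2 * m" if "x < n" for x
    using gS[of x] gS[of "partner x"] pS[of x] that unfolding f_def Sn_def by auto
  have inj: "inj_on f {0..<n}"
  proof
    fix x y assume x: "x \<in> {0..<n}" and y: "y \<in> {0..<n}" and e: "f x = f y"
    show "x = y"
    proof (cases "x \<in> S"; cases "y \<in> S")
      assume "x \<in> S" "y \<in> S" then show ?thesis using e x y ginj unfolding f_def Sn_def by auto
    next
      assume "x \<in> S" "y \<notin> S" then show ?thesis using e x y gS unfolding f_def Sn_def by fastforce
    next
      assume "x \<notin> S" "y \<in> S" then show ?thesis using e x y gS unfolding f_def Sn_def by fastforce
    next
      assume a: "x \<notin> S" "y \<notin> S"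
      then have "g (partner x) = g (partner y)" using e unfolding f_def by auto
      then have "partner x = partner y" using ginj pS a x y by auto
      then show ?thesis using partner_inv x y by (metis atLeastLessThan_iff)
    qed
  qed
  have Enb: "E i j \<longleftrightarrow> j \<in> Oth i \<and> j \<noteq> partner i" if ij: "i < n" "j < n" for i j
    using nbr_partner[OF ij(1)] ij unfolding nbr_def by auto
  have adj: "E i j \<longleftrightarrow> crown m (f i) (f j)" if ij: "i < n" "j < n" for i j
  proof (cases "i \<in> S"; cases "j \<in> S")
    assume a: "i \<in> S" "j \<in> S"
    then have "\<not> E i j" using bip ij by blast
    moreover have "\<not> crown m (f i) (f j)" using a gS[of i] gS[of j] ij unfolding f_def crown_def Sn_def by auto
    ultimately show ?thesis by simp
  next
    assume a: "i \<in> S" "j \<notin> S"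
    have iS: "i \<in> Sn" using a ij by (simp add: Sn_def)
    have "crown m (f i) (f j) \<longleftrightarrow> g (partner j) \<noteq> g i"
      using a gS[OF iS] gS[OF pS[OF ij(2) a(2)]] unfolding f_def crown_def by auto
    also have "\<dots> \<longleftrightarrow> partner j \<noteq> i" using ginj[OF pS[OF ij(2) a(2)] iS] by auto
    also have "\<dots> \<longleftrightarrow> j \<noteq> partner i" using partner_inv ij by metis
    also have "\<dots> \<longleftrightarrow> E i j" using Enb[OF ij] a ij unfolding Oth_def Tn_def by auto
    finally show ?thesis by simp
  next
    assume a: "i \<notin> S" "j \<in> S"
    have jS: "j \<in> Sn" using a ij by (simp add: Sn_def)
    have "crown m (f i) (f j) \<longleftrightarrow> g (partner i) \<noteq> g j"
      using a gS[OF jS] gS[OF pS[OF ij(1) a(1)]] unfolding f_def crown_def by auto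
    also have "\<dots> \<longleftrightarrow> partner i \<noteq> j" using ginj[OF pS[OF ij(1) a(1)] jS] by auto
    also have "\<dots> \<longleftrightarrow> E i j" using Enb[OF ij] a ij unfolding Oth_def Sn_def by auto
    finally show ?thesis by simp
  next
    assume a: "i \<notin> S" "j \<notin> S"
    then have "\<not> E i j" using bip ij by blast
    moreover have "\<not> crown m (f i) (f j)" using a unfolding f_def crown_def by auto
    ultimately show ?thesis by simp
  qed
  show ?thesis unfolding graph_iso_def m_def[symmetric] using bij_from_inj[OF inj flt n2] adj by blast
qed

end




lemma neg_nat: "(of_nat a :: complex) = - of_nat b \<longleftrightarrow> a = 0 \<and> b = 0"
proof
  assume "(of_nat a :: complex) = - of_nat b"
  then have "(of_nat (a + b) :: complex) = 0" by (simp add: eq_neg_iff_add_eq_0)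
  then show "a = 0 \<and> b = 0" by (simp only: of_nat_eq_0_iff) simp
qed simp

context bgraph
begin

lemma compl_integral: assumes "\<forall>x\<in>#spec. x \<in> \<int>"
  shows "\<forall>x\<in>#adj_spectrum n (complement_graph n E). x \<in> \<int>"
proof
  fix x assume "x \<in># adj_spectrum n (complement_graph n E)"
  then have "x = of_nat n - 1 - of_nat k \<or> (\<exists>d\<in>#spec. x = - 1 - d)"
    unfolding spec_compl by (auto dest: in_diffD)
  then show "x \<in> \<int>" using assms by (auto intro!: Ints_diff)
qed

lemma top_in_compl: "of_nat n - 1 - of_nat k \<in># adj_spectrum n (complement_graph n E)"
  unfolding spec_compl by simp

lemma main_equiv:
  assumes n2: "n \<ge> 2"
  shows "(graph_energy n E = graph_energy n (complement_graph n E)) \<longleftrightarrow>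
         (k \<ge> 1 \<and> ((k = card Sn \<and> k = 2) \<or> k + 1 = card Sn))"
proof
  assume eq: "graph_energy n E = graph_energy n (complement_graph n E)"
  have k1: "k \<ge> 1"
  proof (rule ccontr)
    assume "\<not> k \<ge> 1" then have "k = 0" by simp
    then show False using diff_k0 n2 eq by simp
  qed
  have km: "k \<le> card Sn" using half[OF k1 n_pos] by simp
  have "\<not> k + 2 \<le> card Sn" using diff_small[OF k1] eq by auto
  then have "k = card Sn \<or> k + 1 = card Sn" using km by auto
  then show "k \<ge> 1 \<and> ((k = card Sn \<and> k = 2) \<or> k + 1 = card Sn)"
  proof
    assume kc: "k = card Sn"
    then have "2 * real k - 4 = 0" using diff_full[OF k1 kc] eq by simp
    then show ?thesis using kc k1 by simp
  qed (use k1 in simp)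
next
  assume c: "k \<ge> 1 \<and> ((k = card Sn \<and> k = 2) \<or> k + 1 = card Sn)"
  then have k1: "k \<ge> 1" by simp
  from c show "graph_energy n E = graph_energy n (complement_graph n E)"
  proof (elim conjE disjE)
    assume "k = card Sn" "k = 2"
    then show ?thesis using diff_full[OF k1] by simp
  next
    assume "k + 1 = card Sn"
    then interpret crownlike n E k S using k1 by unfold_locales auto
    show ?thesis using diff_crown by simp
  qed
qed

lemma main_iso:
  assumes n2: "n \<ge> 2"
  shows "(k \<ge> 1 \<and> ((k = card Sn \<and> k = 2) \<or> k + 1 = card Sn)) \<longleftrightarrow>
         (graph_iso n E 4 C4 \<or> (\<exists>t\<ge>2. graph_iso n E (2 * t) (crown t)))"
proof
  assume c: "k \<ge> 1 \<and> ((k = card Sn \<and> k = 2) \<or> k + 1 = card Sn)"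
  then have k1: "k \<ge> 1" by simp
  from c show "graph_iso n E 4 C4 \<or> (\<exists>t\<ge>2. graph_iso n E (2 * t) (crown t))"
  proof (elim conjE disjE)
    assume "k = card Sn" "k = 2"
    then show ?thesis using iso_C4[OF k1] by simp
  next
    assume "k + 1 = card Sn"
    then interpret crownlike n E k S using k1 by unfold_locales auto
    have "k + 1 \<ge> 2" using k1 by simp
    then show ?thesis using iso_crown by blast
  qed
next
  assume "graph_iso n E 4 C4 \<or> (\<exists>t\<ge>2. graph_iso n E (2 * t) (crown t))"
  then show "k \<ge> 1 \<and> ((k = card Sn \<and> k = 2) \<or> k + 1 = card Sn)"
  proof
    assume g: "graph_iso n E 4 C4"
    have n4: "n = 4" using iso_card[OF g] .
    have "card (nbr n E 0) = 2" using iso_deg[OF g C4_deg] n4 by simp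
    then have k2: "k = 2" using reg[of 0] n4 by simp
    then have "card Sn = 2" using half[of] n4 by simp
    then show ?thesis using k2 by simp
  next
    assume "\<exists>t\<ge>2. graph_iso n E (2 * t) (crown t)"
    then obtain t where t: "t \<ge> 2" "graph_iso n E (2 * t) (crown t)" by blast
    have nt: "n = 2 * t" using iso_card[OF t(2)] .
    have "card (nbr n E 0) = t - 1" using iso_deg[OF t(2) crown_deg] nt t(1) by simp
    then have kt: "k = t - 1" using reg[of 0] nt t(1) by simp
    then have k1: "k \<ge> 1" using t(1) by simp
    then have "card Sn = t" using half[OF k1 n_pos] nt by simp
    then show ?thesis using kt k1 t(1) by simp
  qed
qed

end

theorem mainTheorem4:
  fixes n :: nat and E :: "nat \<Rightarrow> nat \<Rightarrow> bool"
  assumes "n \<ge> 2"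
    and "simple_graph n E"
    and "regular_graph n E"
    and "bipartite_graph n E"
  shows "(graph_energy n E = graph_energy n (complement_graph n E) \<longleftrightarrow>
            (graph_iso n E 4 C4 \<or> (\<exists>t\<ge>2. graph_iso n E (2 * t) (crown t))))
       \<and> (graph_energy n E = graph_energy n (complement_graph n E) \<longrightarrow>
            integral_graph n E \<and> integral_graph n (complement_graph n E) \<and>
            \<not> isospectral n E n (complement_graph n E))"
proof -
  obtain k where k: "\<And>v. v < n \<Longrightarrow> card {u. u < n \<and> E v u} = k"
    using assms(3) unfolding regular_graph_def by blast
  obtain S where S: "\<And>i j. i < n \<Longrightarrow> j < n \<Longrightarrow> E i j \<Longrightarrow> (i \<in> S \<longleftrightarrow> j \<notin> S)"
    using assms(4) unfolding bipartite_graph_def by blast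
  interpret bgraph n E k S
  proof
    show "n \<ge> 1" using assms(1) by simp
    show "\<And>i j. i < n \<Longrightarrow> j < n \<Longrightarrow> E i j \<Longrightarrow> E j i" using assms(2) unfolding simple_graph_def by blast
    show "\<And>i. i < n \<Longrightarrow> \<not> E i i" using assms(2) unfolding simple_graph_def by blast
    show "\<And>v. v < n \<Longrightarrow> card (nbr n E v) = k" using k unfolding nbr_def by blast
    show "\<And>i j. i < n \<Longrightarrow> j < n \<Longrightarrow> E i j \<Longrightarrow> (i \<in> S \<longleftrightarrow> j \<notin> S)" by (rule S)
  qed
  have part1: "graph_energy n E = graph_energy n (complement_graph n E) \<longleftrightarrow>
            (graph_iso n E 4 C4 \<or> (\<exists>t\<ge>2. graph_iso n E (2 * t) (crown t)))"
    using main_equiv[OF assms(1)] main_iso[OF assms(1)] by simp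
  have part2: "integral_graph n E \<and> integral_graph n (complement_graph n E) \<and>
            \<not> isospectral n E n (complement_graph n E)"
    if eq: "graph_energy n E = graph_energy n (complement_graph n E)"
  proof -
    have c: "k \<ge> 1 \<and> ((k = card Sn \<and> k = 2) \<or> k + 1 = card Sn)" using main_equiv[OF assms(1)] eq by simp
    then have k1: "k \<ge> 1" by simp
    from c show ?thesis
    proof (elim conjE disjE)
      assume kc: "k = card Sn" and k2: "k = 2"
      have n4: "n = 4" using half[OF k1 n_pos] kc k2 by simp
      have vals: "x = 0 \<or> x = 2 \<or> x = - 2" if "x \<in># spec" for x
        using spec_full[OF k1 kc that] k2 by simp
      have int1: "\<forall>x\<in>#spec. x \<in> \<int>"
      proof
        fix x assume "x \<in># spec" then show "x \<in> \<int>" using vals by (metis Ints_0 Ints_minus Ints_numeral)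
      qed
      have "(1::complex) \<in># adj_spectrum n (complement_graph n E)" using top_in_compl n4 k2 by simp
      moreover have "(1::complex) \<notin># spec" using vals by fastforce
      ultimately have "\<not> isospectral n E n (complement_graph n E)" unfolding isospectral_def by metis
      then show ?thesis using int1 compl_integral[OF int1] unfolding integral_graph_def by simp
    next
      assume km: "k + 1 = card Sn"
      interpret crownlike n E k S using k1 km by unfold_locales auto
      have n2: "n = 2 * (k + 1)" using half[OF k1 n_pos] km by simp
      have int1: "\<forall>x\<in>#spec. x \<in> \<int>"
      proof
        fix x assume "x \<in># spec"
        then have "x = 1 \<or> x = - 1 \<or> x = of_nat k \<or> x = - of_nat k" by (rule spec_crown)
        then show "x \<in> \<int>" by (metis Ints_1 Ints_minus Ints_of_nat)
      qed
      have "(of_nat (k + 1)::complex) \<in># adj_spectrum n (complement_graph n E)" using top_in_compl n2 by (simp add: add.commute)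
      moreover have "(of_nat (k + 1)::complex) \<notin># spec"
      proof
        assume "(of_nat (k + 1)::complex) \<in># spec"
        then have "of_nat (k + 1) = (1::complex) \<or> of_nat (k + 1) = - (1::complex) \<or> of_nat (k + 1) = (of_nat k :: complex) \<or> of_nat (k + 1) = - (of_nat k :: complex)"
          by (rule spec_crown)
        then show False using k1 neg_nat[of "k+1" 1] neg_nat[of "k+1" k] by (auto simp del: of_nat_Suc)
      qed
      ultimately have "\<not> isospectral n E n (complement_graph n E)" unfolding isospectral_def by metis
      then show ?thesis using int1 compl_integral[OF int1] unfolding integral_graph_def by simp
    qed
  qed
  show ?thesis using part1 part2 by blast
qed



end
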